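(* Consider the binary symmetric channel with a single error. Let $n\ge2$ and $1\le k\le n-1$, and suppose there is a single-error-correcting transmission strategy of length $n-1$ with $k-1$ feedbacks transmitting $M(n-1)$ messages. Let $$U(n)=2\left\lfloor\frac{2^n}{2(n+1)}\right\rfloor,\qquad r(n)=2^n-(n+1)U(n).$$ Then there is a single-error-correcting transmission strategy of length $n$ with $k$ feedbacks transmitting $M(n)$ messages, where $$M(n)=\begin{cases}2M(n-1) & \text{if } 2M(n-1)\le \frac{2^n}{n+1},\\ U(n) & \text{if } 2M(n-1)>\frac{2^n}{n+1}\text{ and } r(n)<2n,\\ U(n)+1 & \text{if } 2M(n-1)>\frac{2^n}{n+1}\text{ and } r(n)\ge 2n.\end{cases}$$
   Context: Binary symmetric channel: alphabet $\{0,1\}$, an error replaces a symbol by the other symbol; "a single error" means at most one error during the whole transmission. A strategy of length $n$ with $k$ feedbacks: $n=n_1+\cdots+n_{k+1}$; for a message $m\in[M]$, the first $n_1$ symbols depend only on $m$; after $N_{i-1}=n_1+\cdots+n_{i-1}$ symbols have been sent ($i\ge2$), the encoder knows (error-free, instantaneously) the $N_{i-1}$ received symbols, and the $i$th block of $n_i$ symbols is a function of $m$ and these received symbols. $k=0$ means no feedback. The strategy transmits $M$ messages with a single error if the sets of output sequences reachable from distinct messages with at most one error are pairwise disjoint. *)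

theory Defs
  imports Complex_Main
begin

(* A strategy of length n with k feedbacks is given by the set F of feedback
   times {N_1,...,N_k} (N_i = n_1+...+n_i), which are k distinct numbers in
   {1..n-1} (all block lengths n_i positive), and an encoder
   enc m ys t : the symbol sent at time t (0-based) for message m, given the
   received symbols ys known to the encoder at that time.  The encoder only
   ever gets the received symbols up to the last feedback time <= t. *)

definition last_fb :: "nat set \<Rightarrow> nat \<Rightarrow> nat" where
  "last_fb F t = Max (insert 0 {j \<in> F. j \<le> t})"

fun received :: "nat set \<Rightarrow> (nat \<Rightarrow> bool list \<Rightarrow> nat \<Rightarrow> bool) \<Rightarrow> nat \<Rightarrow> nat option \<Rightarrow> nat \<Rightarrow> bool list" where
  "received F enc m e 0 = []"
| "received F enc m e (Suc t) =
     (let ys = received F enc m e t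
      in ys @ [enc m (take (last_fb F t) ys) t \<noteq> (e = Some t)])"

definition outputs :: "nat \<Rightarrow> nat set \<Rightarrow> (nat \<Rightarrow> bool list \<Rightarrow> nat \<Rightarrow> bool) \<Rightarrow> nat \<Rightarrow> bool list set" where
  "outputs n F enc m = {received F enc m e n | e. e = None \<or> (\<exists>s<n. e = Some s)}"

definition single_error_strategy :: "nat \<Rightarrow> nat \<Rightarrow> nat \<Rightarrow> bool" where
  "single_error_strategy n k M \<longleftrightarrow>
     (\<exists>F enc. F \<subseteq> {1..<n} \<and> card F = k \<and>
        (\<forall>m<M. \<forall>m'<M. m \<noteq> m' \<longrightarrow> outputs n F enc m \<inter> outputs n F enc m' = {}))"

definition U_n :: "nat \<Rightarrow> nat" where
  "U_n n = 2 * nat \<lfloor>(2::real) ^ n / (2 * (real n + 1))\<rfloor>"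

definition r_n :: "nat \<Rightarrow> int" where
  "r_n n = 2 ^ n - (int n + 1) * int (U_n n)"

definition Mnext :: "nat \<Rightarrow> nat \<Rightarrow> nat" where
  "Mnext n Mprev =
     (if real (2 * Mprev) \<le> 2 ^ n / (real n + 1) then 2 * Mprev
      else if r_n n < 2 * int n then U_n n else U_n n + 1)"

end

theory Submission
  imports Defs
begin

lemma received_length: "length (received F enc m e t) = t"
  by (induction t) (simp_all add: Let_def)

lemma last_fb_shift:
  assumes "finite F'"
  shows "last_fb (insert 1 (Suc ` F')) (Suc t) = Suc (last_fb F' t)"
proof -
  define S where "S = {j \<in> F'. j \<le> t}"
  have fS: "finite S" using assms by (simp add: S_def)
  have eq: "{j \<in> insert 1 (Suc ` F'). j \<le> Suc t} = insert 1 (Suc ` S)"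
    by (auto simp: S_def)
  have "Max (insert 0 (insert 1 (Suc ` S))) = Suc (Max (insert 0 S))"
  proof (rule antisym)
    show "Max (insert 0 (insert 1 (Suc ` S))) \<le> Suc (Max (insert 0 S))"
      using fS by (auto intro!: Max.boundedI)
    have "Max (insert 0 S) \<in> insert 0 S" using fS by (intro Max_in) auto
    then show "Suc (Max (insert 0 S)) \<le> Max (insert 0 (insert 1 (Suc ` S)))"
      using fS by (auto intro!: Max_ge)
  qed
  then show ?thesis unfolding last_fb_def eq S_def by simp
qed

lemma received_split:
  assumes "finite F'"
    and "\<And>ys t. enc m ys (Suc t) = sub (hd ys) (tl ys) t"
  shows "received (insert 1 (Suc ` F')) enc m e (Suc t) =
    (enc m [] 0 \<noteq> (e = Some 0)) # received F' (\<lambda>_. sub (enc m [] 0 \<noteq> (e = Some 0))) m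
       (case e of None \<Rightarrow> None | Some s \<Rightarrow> if s = 0 then None else Some (s - 1)) t"
proof (induction t)
  case 0
  then show ?case by simp
next
  case (Suc t)
  have L: "last_fb (insert 1 (Suc ` F')) (Suc t) = Suc (last_fb F' t)"
    using last_fb_shift[OF assms(1)] .
  have E: "(e = Some (Suc t)) = ((case e of None \<Rightarrow> None | Some s \<Rightarrow> if s = 0 then None else Some (s - 1)) = Some t)"
    by (cases e) auto
  show ?case
    apply (subst received.simps(2))
    apply (simp only: Let_def Suc L take_Suc_Cons assms(2) list.sel E)
    apply (simp add: Let_def)
    done
qed

lemma received_const:
  assumes "t \<le> length w"
  shows "received F (\<lambda>_ _ t. w ! t) m None t = take t w"
  using assms by (induction t) (simp_all add: Let_def take_Suc_conv_app_nth)

lemma received_fun: "received F (\<lambda>_. g i) m e t = received F g i e t"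
  by (induction t) (simp_all add: Let_def)

lemma outputs_card: "card (outputs n F enc m) \<le> Suc n"
proof -
  have "outputs n F enc m = (\<lambda>e. received F enc m e n) ` (insert None (Some ` {..<n}))"
    unfolding outputs_def by auto
  also have "card \<dots> \<le> card (insert None (Some ` {..<n}))" by (rule card_image_le) simp
  also have "\<dots> \<le> Suc n"
    by (metis card_image_le card_insert_le_m1 card_lessThan finite_lessThan le_refl zero_less_Suc
        card_insert_if diff_Suc_1)
  finally show ?thesis .
qed

lemma outputs_finite: "finite (outputs n F enc m)"
proof -
  have "outputs n F enc m = (\<lambda>e. received F enc m e n) ` (insert None (Some ` {..<n}))"
    unfolding outputs_def by auto
  then show ?thesis by simp
qed

lemma outputs_length: "w \<in> outputs n F enc m \<Longrightarrow> length w = n"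
  unfolding outputs_def by (auto simp: received_length)


lemma card_bool_lists: "card {w::bool list. length w = n} = 2 ^ n"
proof -
  have "card {w::bool list. set w \<subseteq> UNIV \<and> length w = n} = card (UNIV::bool set) ^ n"
    by (rule card_lists_length_eq) simp
  then show ?thesis by simp
qed

lemma construct:
  assumes n': "n = Suc n'" and n'1: "1 \<le> n'"
    and old: "single_error_strategy n' k' A"
    and a0A: "a0 \<le> A" and a1A: "a1 \<le> A"
    and c0: "a0 * n + a1 \<le> 2 ^ n'" and c1: "a1 * n + a0 \<le> 2 ^ n'"
  shows "single_error_strategy n (Suc k') (a0 + a1)"
proof -
  obtain F' enc' where F'sub: "F' \<subseteq> {1..<n'}" and F'card: "card F' = k'"
    and disj: "\<And>i i'. i < A \<Longrightarrow> i' < A \<Longrightarrow> i \<noteq> i' \<Longrightarrow>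
         outputs n' F' enc' i \<inter> outputs n' F' enc' i' = {}"
    using old unfolding single_error_strategy_def by blast
  have fF': "finite F'" using F'sub finite_subset by blast
  define a where "a = (\<lambda>b::bool. if b then a1 else a0)"
  have aA: "a y \<le> A" for y using a0A a1A by (simp add: a_def)
  have ca: "a y * n + a (\<not> y) \<le> 2 ^ n'" for y using c0 c1 by (cases y) (simp_all add: a_def)
  define Ou where "Ou y = (\<Union>i<a y. outputs n' F' enc' i)" for y
  define S where "S y = {w::bool list. length w = n'} - Ou y" for y
  have finS: "finite (S y)" for y
    unfolding S_def by (rule finite_subset[OF _ finite_lists_length_eq[of "UNIV::bool set" n']]) auto
  have cardS: "a (\<not> y) \<le> card (S y)" for y
  proof -
    have "card (Ou y) \<le> (\<Sum>i<a y. card (outputs n' F' enc' i))"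
      unfolding Ou_def by (rule card_UN_le) simp
    also have "\<dots> \<le> (\<Sum>i<a y. n)"
      by (rule sum_mono) (use outputs_card n' in auto)
    finally have "card (Ou y) \<le> a y * n" by simp
    moreover have "2 ^ n' - card (Ou y) \<le> card (S y)"
      unfolding S_def using diff_card_le_card_Diff[of "Ou y" "{w::bool list. length w = n'}"]
      by (simp add: card_bool_lists Ou_def outputs_finite)
    ultimately show ?thesis using ca[of y] by linarith
  qed
  define L where "L y = (SOME xs. set xs = S y \<and> distinct xs)" for y
  have L: "set (L y) = S y \<and> distinct (L y)" for y
    unfolding L_def by (rule someI_ex) (use finite_distinct_list[OF finS] in blast)
  have lenL: "a (\<not> y) \<le> length (L y)" for y
    using L[of y] cardS[of y] distinct_card by metis
  define bt where "bt m = (a0 \<le> m)" for m :: nat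
  define idx where "idx m = (if a0 \<le> m then m - a0 else m)" for m :: nat
  have idx_lt: "m < a0 + a1 \<Longrightarrow> idx m < a (bt m)" for m
    by (auto simp: idx_def a_def bt_def)
  have idx_inj: "bt m = bt m' \<Longrightarrow> idx m = idx m' \<Longrightarrow> m = m'" for m m'
    by (auto simp: idx_def bt_def split: if_splits)
  define sub where "sub m y ys t = (if bt m = y then enc' (idx m) ys t else L y ! idx m ! t)"
    for m y ys t
  define enc where "enc m ys t = (case t of 0 \<Rightarrow> bt m | Suc t' \<Rightarrow> sub m (hd ys) (tl ys) t')"
    for m ys t
  define F where "F = insert 1 (Suc ` F')"
  have Fsub: "F \<subseteq> {1..<n}" using F'sub n' n'1 by (auto simp: F_def)
  have Fcard: "card F = Suc k'"
  proof -
    have "1 \<notin> Suc ` F'" using F'sub by auto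
    then have "card F = Suc (card (Suc ` F'))" using fF' by (simp add: F_def)
    also have "card (Suc ` F') = k'" using F'card by (simp add: card_image)
    finally show ?thesis .
  qed
  have Lmem: "L y ! j \<in> S y" if "j < a (\<not> y)" for y j
    using L[of y] lenL[of y] that by (metis nth_mem order_less_le_trans)
  have outs: "outputs n F enc m \<subseteq> (Cons (bt m)) ` outputs n' F' enc' (idx m)
       \<union> {(\<not> bt m) # L (\<not> bt m) ! idx m}" if m: "m < a0 + a1" for m
  proof
    fix w assume "w \<in> outputs n F enc m"
    then obtain e where e: "e = None \<or> (\<exists>s<n. e = Some s)" and w: "w = received F enc m e n"
      unfolding outputs_def by blast
    define y0 where "y0 = (enc m [] 0 \<noteq> (e = Some 0))"
    define e' where "e' = (case e of None \<Rightarrow> None | Some s \<Rightarrow> if s = 0 then None else Some (s - 1))"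
    have wsplit: "w = y0 # received F' (\<lambda>_. sub m y0) m e' n'"
      unfolding w n' F_def y0_def e'_def
      by (rule received_split[OF fF']) (simp add: enc_def)
    show "w \<in> (Cons (bt m)) ` outputs n' F' enc' (idx m) \<union> {(\<not> bt m) # L (\<not> bt m) ! idx m}"
    proof (cases "e = Some 0")
      case True
      have y0: "y0 = (\<not> bt m)" using True by (simp add: y0_def enc_def)
      have e'N: "e' = None" using True by (simp add: e'_def)
      have subeq: "sub m y0 = (\<lambda>ys t. L y0 ! idx m ! t)"
        using y0 by (auto simp: sub_def fun_eq_iff)
      have mem: "L y0 ! idx m \<in> S y0" using Lmem[of "idx m" y0] idx_lt[OF m] y0 by simp
      then have len: "length (L y0 ! idx m) = n'" by (simp add: S_def)
      have "received F' (\<lambda>_. sub m y0) m e' n' = L y0 ! idx m"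
        unfolding subeq e'N using received_const[of n' "L y0 ! idx m" F' m] len by simp
      then show ?thesis using wsplit y0 by simp
    next
      case False
      have y0: "y0 = bt m" using False by (simp add: y0_def enc_def)
      have subeq: "sub m y0 = enc' (idx m)"
        using y0 by (auto simp: sub_def fun_eq_iff)
      have e': "e' = None \<or> (\<exists>s<n'. e' = Some s)"
        using e False n' by (cases e) (auto simp: e'_def)
      have "received F' (\<lambda>_. sub m y0) m e' n' = received F' enc' (idx m) e' n'"
        unfolding subeq by (rule received_fun)
      then have "received F' (\<lambda>_. sub m y0) m e' n' \<in> outputs n' F' enc' (idx m)"
        using e' unfolding outputs_def by blast
      then show ?thesis using wsplit y0 by simp
    qed
  qed
  have notin: "L y ! j \<notin> outputs n' F' enc' i" if "j < a (\<not> y)" "i < a y" for y j i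
    using Lmem[OF that(1)] that(2) by (auto simp: S_def Ou_def)
  have "\<forall>m<a0 + a1. \<forall>m'<a0 + a1. m \<noteq> m' \<longrightarrow> outputs n F enc m \<inter> outputs n F enc m' = {}"
  proof (intro allI impI)
    fix m m' assume m: "m < a0 + a1" and m': "m' < a0 + a1" and ne: "m \<noteq> m'"
    have i1: "idx m < A" using idx_lt[OF m] aA order_less_le_trans by blast
    have i2: "idx m' < A" using idx_lt[OF m'] aA order_less_le_trans by blast
    show "outputs n F enc m \<inter> outputs n F enc m' = {}"
    proof (rule ccontr)
      assume "outputs n F enc m \<inter> outputs n F enc m' \<noteq> {}"
      then obtain w where w1: "w \<in> outputs n F enc m" and w2: "w \<in> outputs n F enc m'" by blast
      note W1 = subsetD[OF outs[OF m] w1] and W2 = subsetD[OF outs[OF m'] w2]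
      show False
      proof (cases "bt m = bt m'")
        case True
        then have nei: "idx m \<noteq> idx m'" using idx_inj ne by blast
        have D: "outputs n' F' enc' (idx m) \<inter> outputs n' F' enc' (idx m') = {}"
          using disj[OF i1 i2 nei] .
        have lt1: "idx m < length (L (\<not> bt m))" using idx_lt[OF m] lenL[of "\<not> bt m"] by simp
        have lt2: "idx m' < length (L (\<not> bt m))" using idx_lt[OF m'] lenL[of "\<not> bt m"] True by simp
        have "L (\<not> bt m) ! idx m \<noteq> L (\<not> bt m) ! idx m'"
          using L[of "\<not> bt m"] nei lt1 lt2 nth_eq_iff_index_eq by blast
        then show False using W1 W2 True D by auto
      next
        case False
        have n1: "L (bt m') ! idx m \<notin> outputs n' F' enc' (idx m')"
          using notin[of "idx m" "bt m'" "idx m'"] idx_lt[OF m] idx_lt[OF m'] False by simp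
        have n2: "L (bt m) ! idx m' \<notin> outputs n' F' enc' (idx m)"
          using notin[of "idx m'" "bt m" "idx m"] idx_lt[OF m] idx_lt[OF m'] False by simp
        have bm: "bt m' = (\<not> bt m)" using False by blast
        show False using W1 W2 n1 n2 bm by auto
      qed
    qed
  qed
  then show ?thesis unfolding single_error_strategy_def using Fsub Fcard by blast
qed


theorem theorem2:
  fixes n k Mprev :: nat
  assumes "n \<ge> 2" and "1 \<le> k" and "k \<le> n - 1"
    and "single_error_strategy (n - 1) (k - 1) Mprev"
  shows "single_error_strategy n k (Mnext n Mprev)"
proof -
  define n' where "n' = n - 1"
  have n': "n = Suc n'" and n'1: "1 \<le> n'" using assms(1) by (auto simp: n'_def)
  define k0 where "k0 = k - 1"
  have k: "k = Suc k0" using assms(2) by (simp add: k0_def)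
  have old: "single_error_strategy n' k0 Mprev" using assms(4) by (simp add: n'_def k0_def)
  have pw: "(2::nat) ^ n = 2 * 2 ^ n'" using n' by simp
  have pwr: "(2::real) ^ n = 2 * 2 ^ n'" using n' by simp
  define q where "q = nat \<lfloor>(2::real) ^ n / (2 * (real n + 1))\<rfloor>"
  have U: "U_n n = 2 * q" by (simp add: U_n_def q_def)
  have qle: "real q \<le> 2 ^ n / (2 * (real n + 1))"
  proof -
    have "0 \<le> \<lfloor>(2::real) ^ n / (2 * (real n + 1))\<rfloor>" by simp
    then have "real q = real_of_int \<lfloor>(2::real) ^ n / (2 * (real n + 1))\<rfloor>"
      by (simp add: q_def)
    then show ?thesis by linarith
  qed
  then have "real q * (2 * (real n + 1)) \<le> 2 ^ n"
    by (simp add: pos_le_divide_eq)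
  then have "real (q * (n + 1)) \<le> real (2 ^ n')" using pwr by (simp add: algebra_simps)
  then have qc: "q * (n + 1) \<le> 2 ^ n'" by linarith
  show ?thesis
  proof (cases "real (2 * Mprev) \<le> 2 ^ n / (real n + 1)")
    case True
    then have A: "real (2 * Mprev) * (real n + 1) \<le> 2 ^ n" by (simp add: pos_le_divide_eq)
    have e1: "real (2 * (Mprev * (n + 1))) = real (2 * Mprev) * (real n + 1)" by (simp add: algebra_simps)
    have e2: "real (2 * 2 ^ n') = (2::real) ^ n" using pwr by simp
    have "real (2 * (Mprev * (n + 1))) \<le> real (2 * 2 ^ n')" unfolding e1 e2 by (rule A)
    then have "2 * (Mprev * (n + 1)) \<le> 2 * 2 ^ n'" by (simp only: of_nat_le_iff)
    moreover have "Mprev * (n + 1) = Mprev * n + Mprev" by simp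
    ultimately have c: "Mprev * n + Mprev \<le> 2 ^ n'" by linarith
    have "single_error_strategy n (Suc k0) (Mprev + Mprev)"
      by (rule construct[OF n' n'1 old le_refl le_refl c c])
    moreover have "Mnext n Mprev = Mprev + Mprev" using True unfolding Mnext_def by simp
    ultimately show ?thesis using k by simp
  next
    case False
    then have "2 ^ n / (real n + 1) < real (2 * Mprev)" by simp
    moreover have "2 ^ n / (real n + 1) = 2 * (2 ^ n / (2 * (real n + 1)))" using of_nat_0_le_iff[of n] by (simp add: field_simps)
    ultimately have "real q < real Mprev" using qle by simp
    then have qM: "q + 1 \<le> Mprev" by linarith
    show ?thesis
    proof (cases "r_n n < 2 * int n")
      case True
      have c: "q * n + q \<le> 2 ^ n'" using qc by (simp add: algebra_simps)
      have "single_error_strategy n (Suc k0) (q + q)"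
        by (rule construct[OF n' n'1 old _ _ c c]) (use qM in auto)
      moreover have "Mnext n Mprev = q + q" using True False unfolding Mnext_def U by simp
      ultimately show ?thesis using k by simp
    next
      case True2: False
      then have "2 * int n \<le> 2 ^ n - (int n + 1) * int (2 * q)" by (simp add: r_n_def U)
      then have h: "(int n + 1) * int (2 * q) + 2 * int n \<le> 2 ^ n" by linarith
      have e1: "int (2 * (q * (n + 1) + n)) = (int n + 1) * int (2 * q) + 2 * int n"
        by (simp add: algebra_simps)
      have e2: "int (2 ^ n) = 2 ^ n" by simp
      have "int (2 * (q * (n + 1) + n)) \<le> int (2 ^ n)" unfolding e1 e2 by (rule h)
      then have "2 * (q * (n + 1) + n) \<le> 2 ^ n" by (simp only: of_nat_le_iff)
      then have "q * (n + 1) + n \<le> 2 ^ n'" using pw by simp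
      then have c0: "(q + 1) * n + q \<le> 2 ^ n'" and c1: "q * n + (q + 1) \<le> 2 ^ n'"
        using n' by (simp_all add: algebra_simps)
      have "single_error_strategy n (Suc k0) ((q + 1) + q)"
        by (rule construct[OF n' n'1 old _ _ c0 c1]) (use qM in auto)
      moreover have "Mnext n Mprev = (q + 1) + q" using True2 False unfolding Mnext_def U by simp
      ultimately show ?thesis using k by simp
    qed
  qed
qed

end
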